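(* Let $S$ be a finite set, let $\mathcal{G}\subseteq 2^S$ be connected, and let $\mathcal{C}\subseteq\mathcal{G}$ satisfy $|\mathcal{C}|\neq|\chi(\mathcal{C})|$. Then there exist $X,X'\in\mathcal{C}$ with $(-1)^{|X|}\neq(-1)^{|X'|}$ and a simple path $X=X_0 - X_1 - \cdots - X_{n+1}=X'$ in $G_S$ all of whose nodes lie in $\mathcal{G}$, such that $X_i\notin\mathcal{C}$ for $1\le i\le n$.
   Context: An adjacent pair of $2^S$ is a set $\{X,X\setminus\{x\}\}$ with $X\subseteq S$, $x\in X$. $G_S$ is the undirected graph on vertex set $2^S$ whose edges are the adjacent pairs; $\mathcal{G}\subseteq 2^S$ is connected if it induces a connected subgraph of $G_S$. For a family $\mathcal{D}$ of finite sets, $\chi(\mathcal{D})=\sum_{Y\in\mathcal{D}}(-1)^{|Y|}$. *)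

theory Defs
  imports Main
begin

definition adjacent :: "'a set \<Rightarrow> 'a set \<Rightarrow> 'a set \<Rightarrow> bool" where
  "adjacent S X Y \<longleftrightarrow> X \<subseteq> S \<and> Y \<subseteq> S \<and>
     ((\<exists>x\<in>X. Y = X - {x}) \<or> (\<exists>y\<in>Y. X = Y - {y}))"

definition is_walk :: "'a set \<Rightarrow> 'a set list \<Rightarrow> bool" where
  "is_walk S xs \<longleftrightarrow> xs \<noteq> [] \<and> (\<forall>i. Suc i < length xs \<longrightarrow> adjacent S (xs ! i) (xs ! Suc i))"

definition connected_family :: "'a set \<Rightarrow> 'a set set \<Rightarrow> bool" where
  "connected_family S \<G> \<longleftrightarrow> \<G> \<subseteq> Pow S \<and>
     (\<forall>A\<in>\<G>. \<forall>B\<in>\<G>. \<exists>xs. is_walk S xs \<and> set xs \<subseteq> \<G> \<and> hd xs = A \<and> last xs = B)"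

definition euler_char :: "'a set set \<Rightarrow> int" where
  "euler_char \<D> = (\<Sum>Y\<in>\<D>. (-1) ^ card Y)"

end

theory Submission
  imports Defs
begin

lemma walk_single[simp]: "is_walk S [x]"
  by (simp add: is_walk_def)

lemma walk_cons2: "is_walk S (x#y#ys) \<longleftrightarrow> adjacent S x y \<and> is_walk S (y#ys)"
proof
  assume h: "is_walk S (x#y#ys)"
  have "adjacent S x y" using h unfolding is_walk_def by force
  moreover have "is_walk S (y#ys)" unfolding is_walk_def
  proof (intro conjI allI impI)
    fix i assume "Suc i < length (y#ys)"
    then have "Suc (Suc i) < length (x#y#ys)" by simp
    then have "adjacent S ((x#y#ys) ! Suc i) ((x#y#ys) ! Suc (Suc i))"
      using h unfolding is_walk_def by blast
    then show "adjacent S ((y#ys) ! i) ((y#ys) ! Suc i)" by simp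
  qed simp
  ultimately show "adjacent S x y \<and> is_walk S (y#ys)" by blast
next
  assume a: "adjacent S x y \<and> is_walk S (y#ys)"
  show "is_walk S (x#y#ys)" unfolding is_walk_def
  proof (intro conjI allI impI)
    fix i assume "Suc i < length (x#y#ys)"
    then show "adjacent S ((x#y#ys) ! i) ((x#y#ys) ! Suc i)"
      using a unfolding is_walk_def by (cases i) auto
  qed simp
qed

lemma walk_join: "is_walk S (xs @ [a]) \<Longrightarrow> is_walk S (a#zs) \<Longrightarrow> is_walk S (xs @ a # zs)"
proof (induction xs)
  case Nil then show ?case by simp
next
  case (Cons x xs)
  then show ?case by (cases xs) (auto simp: walk_cons2)
qed

lemma walk_take: "is_walk S xs \<Longrightarrow> 0 < k \<Longrightarrow> is_walk S (take k xs)"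
  by (auto simp: is_walk_def)

lemma walk_drop: "is_walk S xs \<Longrightarrow> k < length xs \<Longrightarrow> is_walk S (drop k xs)"
  by (auto simp: is_walk_def)

lemma walk_cut: assumes "is_walk S (xs @ [a] @ ys @ [a] @ zs)"
  shows "is_walk S (xs @ [a] @ zs)"
proof -
  have 1: "is_walk S (xs @ [a])"
    using walk_take[OF assms, of "Suc (length xs)"] by simp
  have 2: "is_walk S (a # zs)"
    using walk_drop[OF assms, of "Suc (length xs + length ys)"] by simp
  show ?thesis using walk_join[OF 1 2] by simp
qed

lemma parity_exists:
  assumes "int (card C) \<noteq> \<bar>euler_char C\<bar>"
  shows "\<exists>X\<in>C. \<exists>X'\<in>C. (-1::int) ^ card X \<noteq> (-1) ^ card X'"
proof (rule ccontr)
  assume h: "\<not> ?thesis"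
  show False
  proof (cases "C = {}")
    case True then show False using assms by (simp add: euler_char_def)
  next
    case False
    then obtain X0 where X0: "X0 \<in> C" by blast
    have "euler_char C = (\<Sum>Y\<in>C. (-1::int) ^ card X0)"
      unfolding euler_char_def
    proof (rule sum.cong)
      fix Y assume "Y \<in> C"
      then show "(-1::int) ^ card Y = (-1) ^ card X0" using h X0 by blast
    qed simp
    also have "\<dots> = int (card C) * (-1) ^ card X0" by simp
    finally have "\<bar>euler_char C\<bar> = int (card C)"
      by (simp only: abs_mult power_abs abs_neg_one power_one abs_of_nat mult_1_right)
    then show False using assms by (metis)
  qed
qed

theorem lemma6p9:
  fixes S :: "'a set" and \<G> \<C> :: "'a set set"
  assumes "finite S"
    and "\<G> \<subseteq> Pow S"
    and "connected_family S \<G>"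
    and "\<C> \<subseteq> \<G>"
    and "int (card \<C>) \<noteq> \<bar>euler_char \<C>\<bar>"
  shows "\<exists>X\<in>\<C>. \<exists>X'\<in>\<C>. ((-1::int) ^ card X \<noteq> (-1) ^ card X') \<and>
           (\<exists>xs. is_walk S xs \<and> distinct xs \<and> length xs \<ge> 2 \<and>
                 hd xs = X \<and> last xs = X' \<and> set xs \<subseteq> \<G> \<and>
                 (\<forall>i. 1 \<le> i \<and> i < length xs - 1 \<longrightarrow> xs ! i \<notin> \<C>))"
proof -
  define P where "P n \<longleftrightarrow> (\<exists>X\<in>\<C>. \<exists>X'\<in>\<C>. (-1::int) ^ card X \<noteq> (-1) ^ card X' \<and>
      (\<exists>xs. is_walk S xs \<and> hd xs = X \<and> last xs = X' \<and> set xs \<subseteq> \<G> \<and> length xs = n))" for n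
  have PI: "P (length ys)" if "Y \<in> \<C>" "Y' \<in> \<C>" "(-1::int) ^ card Y \<noteq> (-1) ^ card Y'"
    "is_walk S ys" "hd ys = Y" "last ys = Y'" "set ys \<subseteq> \<G>" for Y Y' ys
    unfolding P_def using that by blast
  obtain X0 X1 where X: "X0 \<in> \<C>" "X1 \<in> \<C>" "(-1::int) ^ card X0 \<noteq> (-1) ^ card X1"
    using parity_exists[OF assms(5)] by blast
  have "X0 \<in> \<G>" "X1 \<in> \<G>" using X assms(4) by auto
  then have "\<exists>ws. is_walk S ws \<and> set ws \<subseteq> \<G> \<and> hd ws = X0 \<and> last ws = X1"
    using assms(3) unfolding connected_family_def by blast
  then obtain ws where ws: "is_walk S ws" "set ws \<subseteq> \<G>" "hd ws = X0" "last ws = X1"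
    by blast
  have "P (length ws)" by (rule PI[OF X ws(1,3,4,2)])
  then have "\<exists>n. P n" by blast
  then have "\<exists>n. P n \<and> (\<forall>m<n. \<not> P m)" by (simp only: exists_least_iff[of P])
  then obtain n where Pn: "P n" and minn: "\<And>m. m < n \<Longrightarrow> \<not> P m"
    by blast
  from Pn obtain X X' xs where XX: "X \<in> \<C>" "X' \<in> \<C>" "(-1::int) ^ card X \<noteq> (-1) ^ card X'"
    and w: "is_walk S xs" "hd xs = X" "last xs = X'" "set xs \<subseteq> \<G>" "length xs = n"
    unfolding P_def by blast
  have ne: "xs \<noteq> []" using w(1) by (simp add: is_walk_def)
  have len2: "length xs \<ge> 2"
  proof (rule ccontr)
    assume "\<not> ?thesis"
    moreover have "length xs \<noteq> 0" using ne by simp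
    ultimately have "length xs = 1" by linarith
    then obtain a where "xs = [a]" by (auto simp: length_Suc_conv)
    then have "hd xs = last xs" by simp
    then show False using w XX by simp
  qed
  have inter: "\<forall>i. 1 \<le> i \<and> i < length xs - 1 \<longrightarrow> xs ! i \<notin> \<C>"
  proof (intro allI impI)
    fix i assume i: "1 \<le> i \<and> i < length xs - 1"
    have il: "i < length xs" "Suc i < length xs" "0 < i" using i by linarith+
    show "xs ! i \<notin> \<C>"
    proof
      assume Z: "xs ! i \<in> \<C>"
      show False
      proof (cases "(-1::int) ^ card (xs ! i) = (-1) ^ card X")
        case True
        have "P (length (drop i xs))"
        proof (rule PI[OF Z XX(2)])
          show "(-1::int) ^ card (xs ! i) \<noteq> (-1) ^ card X'" using True XX(3) by simp
          show "is_walk S (drop i xs)" using walk_drop[OF w(1), of i] i by linarith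
          show "hd (drop i xs) = xs ! i" using il by (simp add: hd_drop_conv_nth)
          show "last (drop i xs) = X'" using il w(3) by simp
          show "set (drop i xs) \<subseteq> \<G>" using w(4) set_drop_subset[of i xs] by blast
        qed
        then show False using minn il w by auto
      next
        case False
        have "P (length (take (Suc i) xs))"
        proof (rule PI[OF XX(1) Z])
          show "(-1::int) ^ card X \<noteq> (-1) ^ card (xs ! i)" using False by simp
          show "is_walk S (take (Suc i) xs)" using walk_take[OF w(1), of "Suc i"] by simp
          show "hd (take (Suc i) xs) = X" using w(2) by simp
          show "last (take (Suc i) xs) = xs ! i" 
          proof -
            have "take (Suc i) xs \<noteq> []" using il ne by simp
            then have "last (take (Suc i) xs) = take (Suc i) xs ! (length (take (Suc i) xs) - 1)"
              by (rule last_conv_nth)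
            also have "\<dots> = xs ! i" using il by simp
            finally show ?thesis .
          qed
          show "set (take (Suc i) xs) \<subseteq> \<G>" using w(4) set_take_subset[of "Suc i" xs] by blast
        qed
        then show False using minn il w by auto
      qed
    qed
  qed
  have dist: "distinct xs"
  proof (rule ccontr)
    assume "\<not> distinct xs"
    then obtain as a bs cs where d: "xs = as @ [a] @ bs @ [a] @ cs"
      using not_distinct_decomp by blast
    let ?ys = "as @ [a] @ cs"
    have "P (length ?ys)"
    proof (rule PI[OF XX])
      show "is_walk S ?ys" using walk_cut[of S as a bs cs] w(1) d by simp
      show "hd ?ys = X" using w(2) d by (cases as) auto
      show "last ?ys = X'" using w(3) d by (cases cs) auto
      show "set ?ys \<subseteq> \<G>" using w(4) d by auto
    qed
    then show False using minn w d by auto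
  qed
  show ?thesis
    apply (rule bexI[OF _ XX(1)], rule bexI[OF _ XX(2)])
    using XX(3) w dist len2 inter by blast
qed

end
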